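(* Let $\underline{X}=(X_n,p_n)$ and $\underline{Y}=(Y_n,q_n)$ be inverse sequences of sets, let $(f_n,\Phi):\underline{X}\to\underline{Y}$ be a morphism of inverse sequences, let $(t_k)_{k\ge1}$ be integers with $t_1>\Phi(1),\Phi(2)$, $t_k>t_{k-1},\Phi(k+1)$ for $k\ge2$, and $f_i\circ p_{\Phi(i)t_k}=q_{i,k+1}\circ f_{k+1}\circ p_{\Phi(k+1)t_k}$ for all $i\le k$, and let $\hat f:(T_{\underline{X}},v)\to(T_{\underline{Y}},w)$ be the map defined below. Then $\hat f$ is non-expansive, i.e. $d(\hat f(x),\hat f(x'))\le d(x,x')$ for all $x,x'\in T_{\underline{X}}$.
   Context: For an inverse sequence of sets $(X_n,p_n)_{n\ge1}$ ($p_n:X_{n+1}\to X_n$, $p_{nm}=p_n\circ\cdots\circ p_{m-1}:X_m\to X_n$ for $n<m$, $p_{nn}=\mathrm{id}$), the tree $T_{\underline{X}}$ is the geometric realization of the graph with vertex set $\{v\}\sqcup\bigsqcup_n X_n$ and edges $\{x,p_n(x)\}$ for $x\in X_{n+1}$ and $\{x,v\}$ for $x\in X_1$, each edge of length 1, with the path metric, rooted at $v$; vertices of $X_n$ are at distance $n$ from $v$. Similarly $(T_{\underline{Y}},w)$. A morphism $(f_n,\Phi)$ consists of $\Phi:\mathbb{N}\to\mathbb{N}$ and maps $f_n:X_{\Phi(n)}\to Y_n$ such that for all $n'>n$ there is $m\ge\Phi(n),\Phi(n')$ with $f_n\circ p_{\Phi(n)m}=q_{nn'}\circ f_{n'}\circ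 p_{\Phi(n')m}$. Definition of $\hat f$: let $x\in T_{\underline{X}}$ with $t=d(v,x)$, and for each integer $j\le t$ let $x_j$ be the vertex of $X_j$ lying on the arc $[v,x]$. If $t\le t_1$ put $\hat f(x)=w$. If $t_k\le t\le t_{k+1}$ with $k\ge1$, put $y_0=w$ and $y_j=f_j(x_{\Phi(j)})\in Y_j$ for $j\ge1$; then $y_{k-1},y_k$ are adjacent vertices of $T_{\underline{Y}}$, and $\hat f(x)$ is the point of the edge $[y_{k-1},y_k]$ at distance $\frac{t-t_k}{t_{k+1}-t_k}$ from $y_{k-1}$. *)

theory Defs
  imports Complex_Main
begin

text \<open>Inverse sequences of sets are indexed from 1: X :: nat => 'a set (level n),
  bonding maps p n : X (n+1) -> X n.\<close>

definition inv_seq :: "(nat \<Rightarrow> 'a set) \<Rightarrow> (nat \<Rightarrow> 'a \<Rightarrow> 'a) \<Rightarrow> bool" where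
  "inv_seq X p \<longleftrightarrow> (\<forall>n\<ge>1. \<forall>x\<in>X (Suc n). p n x \<in> X n)"

text \<open>prj p n k = p_{n,n+k} = p_n o ... o p_{n+k-1}\<close>
fun prj :: "(nat \<Rightarrow> 'a \<Rightarrow> 'a) \<Rightarrow> nat \<Rightarrow> nat \<Rightarrow> 'a \<Rightarrow> 'a" where
  "prj p n 0 x = x"
| "prj p n (Suc k) x = prj p n k (p (n + k) x)"

definition pnm :: "(nat \<Rightarrow> 'a \<Rightarrow> 'a) \<Rightarrow> nat \<Rightarrow> nat \<Rightarrow> 'a \<Rightarrow> 'a" where
  "pnm p n m x = prj p n (m - n) x"

definition inv_seq_morphism ::
  "(nat \<Rightarrow> 'a set) \<Rightarrow> (nat \<Rightarrow> 'a \<Rightarrow> 'a) \<Rightarrow> (nat \<Rightarrow> 'b set) \<Rightarrow> (nat \<Rightarrow> 'b \<Rightarrow> 'b)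
    \<Rightarrow> (nat \<Rightarrow> 'a \<Rightarrow> 'b) \<Rightarrow> (nat \<Rightarrow> nat) \<Rightarrow> bool" where
  "inv_seq_morphism X p Y q f \<Phi> \<longleftrightarrow>
     (\<forall>n\<ge>1. \<Phi> n \<ge> 1 \<and> (\<forall>x\<in>X (\<Phi> n). f n x \<in> Y n)) \<and>
     (\<forall>n n'. 1 \<le> n \<and> n < n' \<longrightarrow>
        (\<exists>m. m \<ge> \<Phi> n \<and> m \<ge> \<Phi> n' \<and>
           (\<forall>x\<in>X m. f n (pnm p (\<Phi> n) m x) = pnm q n n' (f n' (pnm p (\<Phi> n') m x)))))"

text \<open>Points of the geometric realization T_X of the tree: the root v, or
  Pt n x s with n >= 1, x in X n and n - 1 < s <= n, the point of the edge
  [p_{n-1}(x), x] (resp. [v, x] if n = 1) at distance s from the root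
  (Pt n x n is the vertex x itself).\<close>
datatype 'a tpt = Root | Pt nat 'a real

definition tree_pts :: "(nat \<Rightarrow> 'a set) \<Rightarrow> 'a tpt set" where
  "tree_pts X = {Root} \<union> {Pt n x s | n x s. 1 \<le> n \<and> x \<in> X n \<and> real n - 1 < s \<and> s \<le> real n}"

fun height :: "'a tpt \<Rightarrow> real" where
  "height Root = 0"
| "height (Pt n x s) = s"

text \<open>distance from the root of the meeting point of the arcs [v,a] and [v,b]\<close>
fun meet_height :: "(nat \<Rightarrow> 'a \<Rightarrow> 'a) \<Rightarrow> 'a tpt \<Rightarrow> 'a tpt \<Rightarrow> real" where
  "meet_height p Root b = 0"
| "meet_height p a Root = 0"
| "meet_height p (Pt n x s) (Pt m y r) =
     min (min s r) (real (Max ({0} \<union> {j. 1 \<le> j \<and> j \<le> min n m \<and> pnm p j n x = pnm p j m y})))"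

definition tdist :: "(nat \<Rightarrow> 'a \<Rightarrow> 'a) \<Rightarrow> 'a tpt \<Rightarrow> 'a tpt \<Rightarrow> real" where
  "tdist p a b = height a + height b - 2 * meet_height p a b"

text \<open>For a point at height s with t_k < s <= t_(k+1) the image is the
  point of the edge [y_(k-1), y_k] at distance (s - t_k)/(t_(k+1) - t_k) from y_(k-1),
  where y_k = f_k(x_(Phi k)).  (The endpoint case s = t_k of the paper gives the same
  point y_(k-1) either way.)\<close>
definition fhat :: "(nat \<Rightarrow> 'a \<Rightarrow> 'a) \<Rightarrow> (nat \<Rightarrow> 'a \<Rightarrow> 'b) \<Rightarrow> (nat \<Rightarrow> nat) \<Rightarrow> (nat \<Rightarrow> nat)
    \<Rightarrow> 'a tpt \<Rightarrow> 'b tpt" where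
  "fhat p f \<Phi> t a = (case a of
      Root \<Rightarrow> Root
    | Pt n z s \<Rightarrow>
        (if s \<le> real (t 1) then Root
         else let k = (THE k. 1 \<le> k \<and> real (t k) < s \<and> s \<le> real (t (Suc k)));
                  lam = (s - real (t k)) / (real (t (Suc k)) - real (t k))
              in Pt k (f k (pnm p (\<Phi> k) n z)) (real k - 1 + lam)))"

end

theory Submission
  imports Defs
begin

lemma prj_add: "prj p a (k1 + k2) z = prj p a k1 (prj p (a + k1) k2 z)"
  by (induction k2 arbitrary: z) (simp_all add: add.assoc)

lemma pnm_comp: "a \<le> b \<Longrightarrow> b \<le> c \<Longrightarrow> pnm p a c z = pnm p a b (pnm p b c z)"
proof -
  assume h: "a \<le> b" "b \<le> c"
  have "c - a = (b - a) + (c - b)" using h by simp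
  moreover have "a + (b - a) = b" using h by simp
  ultimately show ?thesis unfolding pnm_def using prj_add[of p a "b-a" "c-b" z] by simp
qed

lemma pnm_refl: "pnm p a a z = z" by (simp add: pnm_def)

lemma prj_mem: "inv_seq X p \<Longrightarrow> 1 \<le> a \<Longrightarrow> z \<in> X (a + k) \<Longrightarrow> prj p a k z \<in> X a"
proof (induction k arbitrary: z)
  case 0 then show ?case by simp
next
  case (Suc k)
  have "p (a + k) z \<in> X (a + k)" using Suc.prems unfolding inv_seq_def by simp
  then show ?case using Suc by simp
qed

lemma pnm_mem: "inv_seq X p \<Longrightarrow> 1 \<le> a \<Longrightarrow> a \<le> c \<Longrightarrow> z \<in> X c \<Longrightarrow> pnm p a c z \<in> X a"
  unfolding pnm_def using prj_mem[of X p a z "c - a"] by simp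

definition pc :: "(nat \<Rightarrow> nat) \<Rightarrow> real \<Rightarrow> nat" where
  "pc t s = (THE k. 1 \<le> k \<and> real (t k) < s \<and> s \<le> real (t (Suc k)))"

definition G :: "(nat \<Rightarrow> nat) \<Rightarrow> real \<Rightarrow> real" where
  "G t s = (if s \<le> real (t 1) then 0 else real (pc t s) - 1 +
     (s - real (t (pc t s))) / (real (t (Suc (pc t s))) - real (t (pc t s))))"

lemma div_le_self: "1 \<le> (D::real) \<Longrightarrow> 0 \<le> x \<Longrightarrow> x / D \<le> x"
  using divide_left_mono[of 1 D x] by simp

locale tm =
  fixes t :: "nat \<Rightarrow> nat"
  assumes tm: "\<And>k. 1 \<le> k \<Longrightarrow> t k < t (Suc k)"
begin

lemma t_diff: assumes "1 \<le> i" "i \<le> j" shows "real (t j) - real (t i) \<ge> real j - real i"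
  using assms(2)
proof (induction j rule: dec_induct)
  case base then show ?case by simp
next
  case (step j)
  have "t j < t (Suc j)" using tm step assms(1) by simp
  then show ?case using step by simp
qed

lemma t_le: "1 \<le> i \<Longrightarrow> i \<le> j \<Longrightarrow> t i \<le> t j"
  using t_diff[of i j] by simp

lemma t_lt: "1 \<le> i \<Longrightarrow> i < j \<Longrightarrow> t i < t j"
  using t_diff[of i j] by simp

lemma pc_ex_aux: "real (t 1) < s \<Longrightarrow> s \<le> real (t (Suc N)) \<Longrightarrow>
   \<exists>k. 1 \<le> k \<and> real (t k) < s \<and> s \<le> real (t (Suc k))"
proof (induction N)
  case 0 then show ?case by simp
next
  case (Suc N)
  show ?case
  proof (cases "s \<le> real (t (Suc N))")
    case True then show ?thesis using Suc by blast
  next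
    case False then show ?thesis using Suc.prems by (intro exI[of _ "Suc N"]) simp
  qed
qed

lemma pc_ex: "real (t 1) < s \<Longrightarrow> \<exists>k. 1 \<le> k \<and> real (t k) < s \<and> s \<le> real (t (Suc k))"
proof -
  assume h: "real (t 1) < s"
  obtain N :: nat where N: "s \<le> real N" using real_arch_simple by blast
  have "real (t (Suc N)) - real (t 1) \<ge> real (Suc N) - 1" using t_diff[of 1 "Suc N"] by simp
  then have "s \<le> real (t (Suc N))" using N by simp
  then show ?thesis using pc_ex_aux h by blast
qed

lemma pc_uniq: "1 \<le> k \<Longrightarrow> real (t k) < s \<Longrightarrow> s \<le> real (t (Suc k)) \<Longrightarrow>
   1 \<le> k' \<Longrightarrow> real (t k') < s \<Longrightarrow> s \<le> real (t (Suc k')) \<Longrightarrow> k = k'"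
proof (rule ccontr)
  assume h: "1 \<le> k" "real (t k) < s" "s \<le> real (t (Suc k))"
     "1 \<le> k'" "real (t k') < s" "s \<le> real (t (Suc k'))" "k \<noteq> k'"
  show False
  proof (cases "k < k'")
    case True
    then have "t (Suc k) \<le> t k'" using t_le[of "Suc k" k'] by simp
    then show False using h by simp
  next
    case False
    then have "k' < k" using h by simp
    then have "t (Suc k') \<le> t k" using t_le[of "Suc k'" k] by simp
    then show False using h by simp
  qed
qed

lemma pc_prop: "real (t 1) < s \<Longrightarrow>
   1 \<le> pc t s \<and> real (t (pc t s)) < s \<and> s \<le> real (t (Suc (pc t s)))"
proof -
  assume h: "real (t 1) < s"
  have "\<exists>!k. 1 \<le> k \<and> real (t k) < s \<and> s \<le> real (t (Suc k))"
    using pc_ex[OF h] pc_uniq by blast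
  then show ?thesis unfolding pc_def by (rule theI')
qed

lemma pc_eq: "1 \<le> k \<Longrightarrow> real (t k) < s \<Longrightarrow> s \<le> real (t (Suc k)) \<Longrightarrow> pc t s = k"
proof -
  assume h: "1 \<le> k" "real (t k) < s" "s \<le> real (t (Suc k))"
  have "real (t 1) \<le> real (t k)" using t_le[of 1 k] h by simp
  then have "real (t 1) < s" using h by simp
  from pc_prop[OF this] h show ?thesis using pc_uniq by blast
qed

lemma pc_mono: "real (t 1) < u \<Longrightarrow> u \<le> v \<Longrightarrow> pc t u \<le> pc t v"
proof (rule ccontr)
  assume h: "real (t 1) < u" "u \<le> v" "\<not> pc t u \<le> pc t v"
  have pu: "1 \<le> pc t u \<and> real (t (pc t u)) < u" using pc_prop h by blast
  have pv: "1 \<le> pc t v \<and> v \<le> real (t (Suc (pc t v)))" using pc_prop h by force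
  have "t (Suc (pc t v)) \<le> t (pc t u)" using t_le[of "Suc (pc t v)" "pc t u"] h by simp
  then show False using pu pv h by simp
qed

lemma G_high: "real (t 1) < s \<Longrightarrow> G t s = real (pc t s) - 1 +
     (s - real (t (pc t s))) / (real (t (Suc (pc t s))) - real (t (pc t s)))"
  unfolding G_def by simp

lemma G_bounds: "real (t 1) < s \<Longrightarrow> real (pc t s) - 1 < G t s \<and> G t s \<le> real (pc t s)
   \<and> G t s - (real (pc t s) - 1) \<le> s - real (t (pc t s))
   \<and> real (pc t s) - G t s \<le> real (t (Suc (pc t s))) - s"
proof -
  assume h: "real (t 1) < s"
  define k where "k = pc t s"
  have P: "1 \<le> k" "real (t k) < s" "s \<le> real (t (Suc k))" using pc_prop[OF h] k_def by auto
  have tk: "t k < t (Suc k)" using tm P by simp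
  define D where "D = real (t (Suc k)) - real (t k)"
  have D1: "D \<ge> 1" using tk D_def by simp
  have Gs: "G t s = real k - 1 + (s - real (t k)) / D" using G_high[OF h] k_def D_def by simp
  have l1: "(s - real (t k)) / D > 0" using P D1 by simp
  have l2: "(s - real (t k)) / D \<le> 1" using P D1 D_def by simp
  have l3: "(s - real (t k)) / D \<le> s - real (t k)"
    using P D1 div_le_self by simp
  have l4: "1 - (s - real (t k)) / D \<le> real (t (Suc k)) - s"
  proof -
    have "1 - (s - real (t k)) / D = (real (t (Suc k)) - s) / D" using D1 D_def
      by (simp add: field_simps)
    also have "\<dots> \<le> real (t (Suc k)) - s" using P D1 div_le_self by simp
    finally show ?thesis .
  qed
  show ?thesis using Gs l1 l2 l3 l4 k_def by simp
qed

lemma G_nonneg: "0 \<le> G t s"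
proof (cases "s \<le> real (t 1)")
  case True then show ?thesis by (simp add: G_def)
next
  case False
  then have "real (pc t s) - 1 < G t s" "1 \<le> pc t s" using G_bounds pc_prop by auto
  then show ?thesis by simp
qed

lemma G_low: "s \<le> real (t 1) \<Longrightarrow> G t s = 0" by (simp add: G_def)

lemma G_mono: "u \<le> v \<Longrightarrow> G t u \<le> G t v"
proof -
  assume uv: "u \<le> v"
  show ?thesis
  proof (cases "u \<le> real (t 1)")
    case True then show ?thesis using G_low G_nonneg by simp
  next
    case False
    then have u1: "real (t 1) < u" by simp
    then have v1: "real (t 1) < v" using uv by simp
    have km: "pc t u \<le> pc t v" using pc_mono u1 uv by simp
    show ?thesis
    proof (cases "pc t u = pc t v")
      case True
      define k where "k = pc t v"
      have "t k < t (Suc k)" using tm pc_prop[OF v1] k_def by simp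
      then have "real (t (Suc k)) - real (t k) > 0" by simp
      then have "(u - real (t k)) / (real (t (Suc k)) - real (t k))
          \<le> (v - real (t k)) / (real (t (Suc k)) - real (t k))"
        using uv by (simp add: divide_right_mono)
      then show ?thesis using G_high[OF u1] G_high[OF v1] True k_def by simp
    next
      case False
      then have "pc t u + 1 \<le> pc t v" using km by simp
      then show ?thesis using G_bounds[OF u1] G_bounds[OF v1] by linarith
    qed
  qed
qed

lemma G_lip: "u \<le> v \<Longrightarrow> G t v - G t u \<le> v - u"
proof -
  assume uv: "u \<le> v"
  show ?thesis
  proof (cases "v \<le> real (t 1)")
    case True then show ?thesis using G_low uv by simp
  next
    case False
    then have v1: "real (t 1) < v" by simp
    define k2 where "k2 = pc t v"
    have P2: "1 \<le> k2" using pc_prop[OF v1] k2_def by simp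
    have B2: "G t v - (real k2 - 1) \<le> v - real (t k2)" using G_bounds[OF v1] k2_def by simp
    show ?thesis
    proof (cases "u \<le> real (t 1)")
      case True
      have "real (t k2) - real (t 1) \<ge> real k2 - 1" using t_diff[of 1 k2] P2 by simp
      then show ?thesis using True G_low B2 by simp
    next
      case False
      then have u1: "real (t 1) < u" by simp
      define k1 where "k1 = pc t u"
      have km: "k1 \<le> k2" using pc_mono u1 uv k1_def k2_def by simp
      have P1: "1 \<le> k1" using pc_prop[OF u1] k1_def by simp
      show ?thesis
      proof (cases "k1 = k2")
        case True
        have "t k2 < t (Suc k2)" using tm P2 by simp
        then have D: "real (t (Suc k2)) - real (t k2) \<ge> 1" by simp
        have "G t v - G t u = (v - real (t k2)) / (real (t (Suc k2)) - real (t k2))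
              - (u - real (t k2)) / (real (t (Suc k2)) - real (t k2))"
          using G_high[OF u1] G_high[OF v1] True k1_def k2_def by simp
        also have "\<dots> = (v - u) / (real (t (Suc k2)) - real (t k2))"
          by (simp add: diff_divide_distrib)
        also have "\<dots> \<le> v - u" using D uv div_le_self by simp
        finally show ?thesis .
      next
        case False
        then have "Suc k1 \<le> k2" using km by simp
        then have "real (t k2) - real (t (Suc k1)) \<ge> real k2 - real (Suc k1)"
          using t_diff[of "Suc k1" k2] by simp
        moreover have "real k1 - G t u \<le> real (t (Suc k1)) - u"
          using G_bounds[OF u1] k1_def by simp
        ultimately show ?thesis using B2 by simp
      qed
    qed
  qed
qed

end

lemma fhat_low: "s \<le> real (t 1) \<Longrightarrow> fhat p f \<Phi> t (Pt n z s) = Root"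
  by (simp add: fhat_def)

lemma fhat_high: "real (t 1) < s \<Longrightarrow> fhat p f \<Phi> t (Pt n z s) =
   Pt (pc t s) (f (pc t s) (pnm p (\<Phi> (pc t s)) n z)) (G t s)"
  by (simp add: fhat_def Let_def pc_def G_def)

lemma height_fhat: "height (fhat p f \<Phi> t a) = G t (height a)"
proof (cases a)
  case Root then show ?thesis by (simp add: fhat_def G_def)
next
  case (Pt n z s)
  then show ?thesis
    by (cases "s \<le> real (t 1)") (simp_all add: fhat_low fhat_high G_def)
qed

lemma meet_Root2: "meet_height p a Root = 0" by (cases a) auto

lemma meet_nonneg: "0 \<le> height a \<Longrightarrow> 0 \<le> height b \<Longrightarrow> 0 \<le> meet_height p a b"
  by (cases a; cases b) auto

lemma meet_le1: "0 \<le> height a \<Longrightarrow> meet_height p a b \<le> height a"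
  by (cases a; cases b) auto

lemma meet_le2: "0 \<le> height b \<Longrightarrow> meet_height p a b \<le> height b"
  by (cases a; cases b) auto

theorem proposition4p2p1:
  fixes X :: "nat \<Rightarrow> 'a set" and p :: "nat \<Rightarrow> 'a \<Rightarrow> 'a"
    and Y :: "nat \<Rightarrow> 'b set" and q :: "nat \<Rightarrow> 'b \<Rightarrow> 'b"
    and f :: "nat \<Rightarrow> 'a \<Rightarrow> 'b" and \<Phi> :: "nat \<Rightarrow> nat" and t :: "nat \<Rightarrow> nat"
  assumes "inv_seq X p" and "inv_seq Y q"
    and "inv_seq_morphism X p Y q f \<Phi>"
    and "t 1 > \<Phi> 1" and "t 1 > \<Phi> 2"
    and "\<And>k. k \<ge> 2 \<Longrightarrow> t k > t (k - 1) \<and> t k > \<Phi> (Suc k)"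
    and "\<And>k i x. 1 \<le> i \<Longrightarrow> i \<le> k \<Longrightarrow> x \<in> X (t k) \<Longrightarrow>
           f i (pnm p (\<Phi> i) (t k) x) = pnm q i (Suc k) (f (Suc k) (pnm p (\<Phi> (Suc k)) (t k) x))"
    and "a \<in> tree_pts X" and "b \<in> tree_pts X"
  shows "tdist q (fhat p f \<Phi> t a) (fhat p f \<Phi> t b) \<le> tdist p a b"
proof -
  have tm: "\<And>k. 1 \<le> k \<Longrightarrow> t k < t (Suc k)"
  proof -
    fix k :: nat assume "1 \<le> k"
    then have "Suc k \<ge> 2" by simp
    from assms(6)[OF this] show "t k < t (Suc k)" by simp
  qed
  interpret tm t using tm by unfold_locales
  have phi2: "\<And>k0. 1 \<le> k0 \<Longrightarrow> \<Phi> (Suc k0) < t k0"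
  proof -
    fix k0 :: nat assume k0: "1 \<le> k0"
    show "\<Phi> (Suc k0) < t k0"
    proof (cases "k0 = 1")
      case True then show ?thesis using assms(5) by (simp add: numeral_2_eq_2)
    next
      case False then have "k0 \<ge> 2" using k0 by simp
      then show ?thesis using assms(6)[of k0] by simp
    qed
  qed
  have phi_lt: "\<And>j. 1 \<le> j \<Longrightarrow> \<Phi> j < t j"
  proof -
    fix j :: nat assume j: "1 \<le> j"
    show "\<Phi> j < t j"
    proof (cases "j = 1")
      case True then show ?thesis using assms(4) by simp
    next
      case False
      then obtain j0 where j0: "j = Suc j0" "1 \<le> j0" using j by (cases j) auto
      have "\<Phi> (Suc j0) < t j0" using phi2 j0 by simp
      moreover have "t j0 < t (Suc j0)" using tm j0 by simp
      ultimately show ?thesis using j0 by simp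
    qed
  qed
  have cons: "\<And>n z s j. z \<in> X n \<Longrightarrow> s \<le> real n \<Longrightarrow> real (t 1) < s \<Longrightarrow> 1 \<le> j \<Longrightarrow> j \<le> pc t s
     \<Longrightarrow> pnm q j (pc t s) (f (pc t s) (pnm p (\<Phi> (pc t s)) n z)) = f j (pnm p (\<Phi> j) n z)"
  proof -
    fix n z s j assume z: "z \<in> X n" and sn: "s \<le> real n" and s1: "real (t 1) < s"
      and j1: "1 \<le> j" and jk: "j \<le> pc t s"
    define k where "k = pc t s"
    have P: "1 \<le> k" "real (t k) < s" using pc_prop[OF s1] k_def by auto
    show "pnm q j (pc t s) (f (pc t s) (pnm p (\<Phi> (pc t s)) n z)) = f j (pnm p (\<Phi> j) n z)"
    proof (cases "j = k")
      case True then show ?thesis using k_def by (simp add: pnm_refl)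
    next
      case False
      obtain k0 where k0e: "k = Suc k0" using P by (cases k) auto
      have k0: "k = Suc k0" "1 \<le> k0" "j \<le> k0" using k0e False jk j1 k_def by auto
      have "t k0 < t k" using tm k0 by simp
      then have tk0n: "t k0 \<le> n" using P sn by linarith
      have tk01: "1 \<le> t k0" using phi_lt[of k0] k0 by simp
      define xx where "xx = pnm p (t k0) n z"
      have xx: "xx \<in> X (t k0)" using pnm_mem[OF assms(1) tk01 tk0n z] xx_def by simp
      have e: "f j (pnm p (\<Phi> j) (t k0) xx) = pnm q j (Suc k0) (f (Suc k0) (pnm p (\<Phi> (Suc k0)) (t k0) xx))"
        using assms(7)[OF j1 k0(3) xx] .
      have "\<Phi> j < t j" using phi_lt j1 by simp
      moreover have "t j \<le> t k0" using t_le j1 k0 by simp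
      ultimately have c1: "pnm p (\<Phi> j) (t k0) xx = pnm p (\<Phi> j) n z"
        using pnm_comp[of "\<Phi> j" "t k0" n p z] tk0n xx_def by simp
      have "\<Phi> (Suc k0) < t k0" using phi2 k0 by simp
      then have c2: "pnm p (\<Phi> (Suc k0)) (t k0) xx = pnm p (\<Phi> (Suc k0)) n z"
        using pnm_comp[of "\<Phi> (Suc k0)" "t k0" n p z] tk0n xx_def by simp
      show ?thesis using e c1 c2 k0 k_def by simp
    qed
  qed
  have hpos: "\<And>c. c \<in> tree_pts X \<Longrightarrow> 0 \<le> height c"
    unfolding tree_pts_def by auto
  define M where "M = meet_height p a b"
  define A where "A = fhat p f \<Phi> t a"
  define B where "B = fhat p f \<Phi> t b"
  define M' where "M' = meet_height q A B"
  have ha: "0 \<le> height a" "0 \<le> height b" using hpos assms(8,9) by auto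
  have Mle: "0 \<le> M" "M \<le> height a" "M \<le> height b"
    using meet_nonneg meet_le1 meet_le2 ha M_def by auto
  have hA: "height A = G t (height a)" "height B = G t (height b)"
    using height_fhat A_def B_def by auto
  have key: "G t M \<le> M'"
  proof (cases "M \<le> real (t 1)")
    case True
    have "0 \<le> M'" unfolding M'_def using meet_nonneg hA G_nonneg by metis
    then show ?thesis using True G_low by simp
  next
    case False
    then have M1: "real (t 1) < M" by simp
    have aP: "a \<noteq> Root" using M1 M_def by auto
    have bP: "b \<noteq> Root" using M1 M_def meet_Root2[of p a] by force
    obtain n x s where a: "a = Pt n x s" "1 \<le> n" "x \<in> X n" "s \<le> real n"
      using assms(8) aP unfolding tree_pts_def by auto
    obtain m y r where b: "b = Pt m y r" "1 \<le> m" "y \<in> X m" "r \<le> real m"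
      using assms(9) bP unfolding tree_pts_def by auto
    define S where "S = {j. 1 \<le> j \<and> j \<le> min n m \<and> pnm p j n x = pnm p j m y}"
    define J where "J = Max ({0} \<union> S)"
    have Meq: "M = min (min s r) (real J)" using M_def a b S_def J_def by simp
    have Ms: "M \<le> s" "M \<le> r" "M \<le> real J" using Meq by auto
    have s1: "real (t 1) < s" and r1: "real (t 1) < r" using Ms M1 by auto
    define k where "k = pc t s"
    define k' where "k' = pc t r"
    define j where "j = pc t M"
    have Aeq: "A = Pt k (f k (pnm p (\<Phi> k) n x)) (G t s)"
      using A_def a fhat_high[of t s, OF s1] k_def by simp
    have Beq: "B = Pt k' (f k' (pnm p (\<Phi> k') m y)) (G t r)"
      using B_def b fhat_high[of t r, OF r1] k'_def by simp
    define S' where "S' = {i. 1 \<le> i \<and> i \<le> min k k' \<and>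
       pnm q i k (f k (pnm p (\<Phi> k) n x)) = pnm q i k' (f k' (pnm p (\<Phi> k') m y))}"
    have M'eq: "M' = min (min (G t s) (G t r)) (real (Max ({0} \<union> S')))"
      using M'_def Aeq Beq S'_def by simp
    have jk: "j \<le> k" "j \<le> k'" using pc_mono M1 Ms j_def k_def k'_def by auto
    have j1: "1 \<le> j" "real (t j) < M" using pc_prop[OF M1] j_def by auto
    have GM: "G t M \<le> real j" using G_bounds[OF M1] j_def by simp
    have fS: "finite S" unfolding S_def by (rule finite_subset[of _ "{..min n m}"]) auto
    have "J \<in> {0} \<union> S" unfolding J_def using fS by (intro Max_in) auto
    moreover have "t j < J" using j1 Ms by simp
    ultimately have JS: "J \<in> S" by auto
    then have Jnm: "J \<le> n" "J \<le> m" "pnm p J n x = pnm p J m y" unfolding S_def by auto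
    have pj: "\<Phi> j < J" using phi_lt[OF j1(1)] \<open>t j < J\<close> by simp
    have same: "pnm p (\<Phi> j) n x = pnm p (\<Phi> j) m y"
      using pnm_comp[of "\<Phi> j" J n p x] pnm_comp[of "\<Phi> j" J m p y] pj Jnm by simp
    have "j \<in> S'" unfolding S'_def
      using cons[OF a(3) a(4) s1 j1(1)] cons[OF b(3) b(4) r1 j1(1)] jk same j1 k_def k'_def
      by simp
    moreover have "finite S'" unfolding S'_def
      by (rule finite_subset[of _ "{..min k k'}"]) auto
    ultimately have "j \<le> Max ({0} \<union> S')" by (intro Max_ge) auto
    moreover have "G t M \<le> G t s" "G t M \<le> G t r" using G_mono Ms by auto
    ultimately show ?thesis using M'eq GM by simp
  qed
  have l1: "G t (height a) - G t M \<le> height a - M" using G_lip Mle by simp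
  have l2: "G t (height b) - G t M \<le> height b - M" using G_lip Mle by simp
  have "tdist q A B = G t (height a) + G t (height b) - 2 * M'"
    unfolding tdist_def M'_def using hA by simp
  moreover have "tdist p a b = height a + height b - 2 * M" unfolding tdist_def M_def by simp
  ultimately show ?thesis using key l1 l2 A_def B_def by simp
qed

end
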